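(* Let $\mathcal V$ be a finite alphabet, $\mathcal V^*$ the set of finite strings over $\mathcal V$, $e$ an environment, $p(t)$ a probability distribution on test suites $t\in\mathcal V^*$, and $p(c)$ a probability distribution on implementations $c\in\mathcal V^*$. Let $$\mathrm{sim}_{p,e}(c_1,c_2):=\mathbb E_{t\sim p}\Big[\tfrac{1}{|t|}\sum_{k=1}^{|t|}\mathbf 1\{O_k(c_1,t\mid e)=O_k(c_2,t\mid e)\}\Big],$$ fix $s\in\mathbb N$, set $\mathrm{sim}^s_{p,e}:=(\mathrm{sim}_{p,e})^s$, and for $c\in\mathcal V^*$ define $p(\mathcal N_c^s):=\sum_{c'\in\mathcal V^*}p(c')\,\mathrm{sim}^s_{p,e}(c,c')$. If $c,c'\in\mathcal V^*$ satisfy $\mathrm{sim}^s_{p,e}(c,c')\ge 1-\varepsilon$ for some $\varepsilon\in(0,1)$, then $$|p(\mathcal N_c^s)-p(\mathcal N_{c'}^s)|\le\sqrt{2\varepsilon}.$$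
   Context: A test suite $t\in\mathcal V^*$ consists of $|t|\ge1$ test cases. For an environment $e$, an implementation $c$ and a test suite $t$, the test harness returns a deterministic output vector $O(c,t\mid e)=(O_1(c,t\mid e),\dots,O_{|t|}(c,t\mid e))\in\mathbb O^{|t|}$ for a set $\mathbb O$ of possible test outputs. The quantity $p(\mathcal N_c^s)$ is the probability measure of the fuzzy neighborhood of $c$, i.e. the expected membership $\mathbb E_{c'\sim p}[\mathrm{sim}^s_{p,e}(c,c')]$. *)

theory Defs
  imports "HOL-Probability.Probability"
begin

text \<open>Test harness: Out e c t k is the k-th test output (k < length t, 0-based)
  of implementation c on test suite t in environment e.\<close>

definition sim ::
  "'v list pmf \<Rightarrow> ('e \<Rightarrow> 'v list \<Rightarrow> 'v list \<Rightarrow> nat \<Rightarrow> 'o) \<Rightarrow> 'e \<Rightarrow> 'v list \<Rightarrow> 'v list \<Rightarrow> real"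
  where
  "sim pt Out e c1 c2 =
     measure_pmf.expectation pt
       (\<lambda>t. (1 / real (length t)) *
            (\<Sum>k<length t. if Out e c1 t k = Out e c2 t k then 1 else 0))"

definition sim_pow ::
  "nat \<Rightarrow> 'v list pmf \<Rightarrow> ('e \<Rightarrow> 'v list \<Rightarrow> 'v list \<Rightarrow> nat \<Rightarrow> 'o) \<Rightarrow> 'e \<Rightarrow> 'v list \<Rightarrow> 'v list \<Rightarrow> real"
  where "sim_pow s pt Out e c1 c2 = (sim pt Out e c1 c2) ^ s"

definition nbhd_prob ::
  "nat \<Rightarrow> 'v list pmf \<Rightarrow> 'v list pmf \<Rightarrow> ('e \<Rightarrow> 'v list \<Rightarrow> 'v list \<Rightarrow> nat \<Rightarrow> 'o) \<Rightarrow> 'e \<Rightarrow> 'v list \<Rightarrow> real"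
  where "nbhd_prob s pc pt Out e c = measure_pmf.expectation pc (\<lambda>c'. sim_pow s pt Out e c c')"

end

theory Submission
  imports Defs
begin

definition gg :: "('e \<Rightarrow> 'v list \<Rightarrow> 'v list \<Rightarrow> nat \<Rightarrow> 'o) \<Rightarrow> 'e \<Rightarrow> 'v list \<Rightarrow> 'v list \<Rightarrow> 'v list \<Rightarrow> real"
  where "gg Out e c1 c2 t = (1 / real (length t)) *
            (\<Sum>k<length t. if Out e c1 t k = Out e c2 t k then 1 else 0)"

lemma sim_gg: "sim pt Out e c1 c2 = measure_pmf.expectation pt (gg Out e c1 c2)"
  unfolding sim_def gg_def by simp

lemma gg_bounds: "0 \<le> gg Out e c1 c2 t \<and> gg Out e c1 c2 t \<le> 1"
proof -
  have s0: "0 \<le> (\<Sum>k<length t. if Out e c1 t k = Out e c2 t k then 1 else 0::real)"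
    by (rule sum_nonneg) auto
  have s1: "(\<Sum>k<length t. if Out e c1 t k = Out e c2 t k then 1 else 0::real) \<le> (\<Sum>k<length t. 1)"
    by (rule sum_mono) auto
  show ?thesis
  proof (cases "length t = 0")
    case True thus ?thesis by (simp add: gg_def)
  next
    case False
    then show ?thesis using s0 s1 unfolding gg_def by (auto simp: field_simps)
  qed
qed

lemma gg_sym: "gg Out e c1 c2 t = gg Out e c2 c1 t"
  unfolding gg_def by (simp add: eq_commute)

lemma gg_tri: "gg Out e c1 c2 t + gg Out e c2 c3 t - 1 \<le> gg Out e c1 c3 t"
proof (cases "length t = 0")
  case True thus ?thesis by (simp add: gg_def)
next
  case False
  let ?I = "\<lambda>a b k. (if Out e a t k = Out e b t k then 1 else 0::real)"
  have "(\<Sum>k<length t. ?I c1 c2 k) + (\<Sum>k<length t. ?I c2 c3 k) - (\<Sum>k<length t. 1)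
        = (\<Sum>k<length t. ?I c1 c2 k + ?I c2 c3 k - 1)"
    by (simp add: sum.distrib sum_subtractf)
  also have "\<dots> \<le> (\<Sum>k<length t. ?I c1 c3 k)"
    by (rule sum_mono) auto
  finally have h: "(\<Sum>k<length t. ?I c1 c2 k) + (\<Sum>k<length t. ?I c2 c3 k) - real (length t)
        \<le> (\<Sum>k<length t. ?I c1 c3 k)" by simp
  have pos: "real (length t) > 0" using False by simp
  have "gg Out e c1 c2 t + gg Out e c2 c3 t - 1
      = ((\<Sum>k<length t. ?I c1 c2 k) + (\<Sum>k<length t. ?I c2 c3 k) - real (length t)) / real (length t)"
    unfolding gg_def using pos by (simp add: field_simps)
  also have "\<dots> \<le> (\<Sum>k<length t. ?I c1 c3 k) / real (length t)"
    using h pos by (simp add: divide_right_mono)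
  also have "\<dots> = gg Out e c1 c3 t" unfolding gg_def by simp
  finally show ?thesis .
qed

lemma pmf_integrable01:
  fixes f :: "'a \<Rightarrow> real"
  assumes "\<And>x. 0 \<le> f x \<and> f x \<le> 1"
  shows "integrable (measure_pmf p) f"
proof (rule measure_pmf.integrable_const_bound[where B=1])
  show "AE x in measure_pmf p. norm (f x) \<le> 1"
  proof (rule AE_I2)
    fix x have "0 \<le> f x" "f x \<le> 1" using assms[of x] by simp_all
    then show "norm (f x) \<le> 1" by simp
  qed
qed simp

lemma sim_bounds: "0 \<le> sim pt Out e c1 c2 \<and> sim pt Out e c1 c2 \<le> 1"
proof -
  have i: "integrable (measure_pmf pt) (gg Out e c1 c2)"
    by (rule pmf_integrable01) (rule gg_bounds)
  have "0 \<le> measure_pmf.expectation pt (gg Out e c1 c2)"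
    by (rule integral_nonneg_AE) (simp add: gg_bounds)
  moreover have "measure_pmf.expectation pt (gg Out e c1 c2) \<le> measure_pmf.expectation pt (\<lambda>_. 1::real)"
    by (rule integral_mono[OF i]) (simp_all add: gg_bounds)
  ultimately show ?thesis by (simp add: sim_gg)
qed

lemma sim_sym: "sim pt Out e c1 c2 = sim pt Out e c2 c1"
proof -
  have "gg Out e c1 c2 = gg Out e c2 c1" by (rule ext) (rule gg_sym)
  then show ?thesis unfolding sim_gg by simp
qed

lemma sim_tri: "sim pt Out e c1 c2 + sim pt Out e c2 c3 - 1 \<le> sim pt Out e c1 c3"
proof -
  have i1: "integrable (measure_pmf pt) (gg Out e c1 c2)"
    by (rule pmf_integrable01) (rule gg_bounds)
  have i2: "integrable (measure_pmf pt) (gg Out e c2 c3)"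
    by (rule pmf_integrable01) (rule gg_bounds)
  have i3: "integrable (measure_pmf pt) (gg Out e c1 c3)"
    by (rule pmf_integrable01) (rule gg_bounds)
  have "sim pt Out e c1 c2 + sim pt Out e c2 c3 - 1 =
     measure_pmf.expectation pt (\<lambda>t. gg Out e c1 c2 t + gg Out e c2 c3 t - 1)"
    unfolding sim_gg using i1 i2 by (simp add: Bochner_Integration.integral_diff Bochner_Integration.integral_add)
  also have "\<dots> \<le> measure_pmf.expectation pt (gg Out e c1 c3)"
  proof (rule integral_mono)
    show "integrable (measure_pmf pt) (\<lambda>t. gg Out e c1 c2 t + gg Out e c2 c3 t - 1)"
      using i1 i2 by (intro Bochner_Integration.integrable_diff Bochner_Integration.integrable_add measure_pmf.integrable_const)
  qed (rule i3, rule gg_tri)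
  finally show ?thesis by (simp add: sim_gg)
qed

lemma pow_diff_le:
  fixes u v d :: real
  assumes "0 \<le> u" "u \<le> v" "v \<le> 1"
  shows "v ^ s - u ^ s \<le> 1 - (1 - (v - u)) ^ s"
proof -
  have "v ^ s - u ^ s = (v - u) * (\<Sum>i<s. u^(s - Suc i) * v^i)"
    by (rule power_diff_sumr2)
  also have "\<dots> \<le> (v - u) * (\<Sum>i<s. (1 - (v - u))^(s - Suc i) * 1^i)"
  proof (rule mult_left_mono)
    show "(\<Sum>i<s. u^(s - Suc i) * v^i) \<le> (\<Sum>i<s. (1 - (v - u))^(s - Suc i) * 1^i)"
    proof (rule sum_mono)
      fix i
      have a: "u^(s - Suc i) \<le> (1 - (v - u))^(s - Suc i)"
        by (rule power_mono) (use assms in auto)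
      have b: "v^i \<le> 1^i" by (rule power_mono) (use assms in auto)
      show "u^(s - Suc i) * v^i \<le> (1 - (v - u))^(s - Suc i) * 1^i"
        by (rule mult_mono[OF a b]) (use assms in auto)
    qed
  qed (use assms in auto)
  also have "\<dots> = 1 ^ s - (1 - (v - u)) ^ s"
    using power_diff_sumr2[of "1::real" s "1 - (v - u)"] by simp
  finally show ?thesis by simp
qed

lemma pow_abs_le:
  fixes u v a :: real
  assumes "0 \<le> u" "u \<le> 1" "0 \<le> v" "v \<le> 1" "0 \<le> a" "\<bar>u - v\<bar> \<le> 1 - a"
  shows "\<bar>u ^ s - v ^ s\<bar> \<le> 1 - a ^ s"
proof -
  have key: "y ^ s - x ^ s \<le> 1 - a ^ s" if "0 \<le> x" "x \<le> y" "y \<le> 1" "y - x \<le> 1 - a" for x y :: real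
  proof -
    have "y ^ s - x ^ s \<le> 1 - (1 - (y - x)) ^ s" by (rule pow_diff_le) (use that in auto)
    moreover have "a ^ s \<le> (1 - (y - x)) ^ s" by (rule power_mono) (use that assms in auto)
    ultimately show ?thesis by simp
  qed
  show ?thesis
  proof (cases "u \<le> v")
    case True
    have "u ^ s \<le> v ^ s" by (rule power_mono) (use True assms in linarith)+
    have d: "v - u \<le> 1 - a" using assms(6) True by linarith
    have "v ^ s - u ^ s \<le> 1 - a ^ s" by (rule key[OF assms(1) True assms(4) d])
    with \<open>u ^ s \<le> v ^ s\<close> show ?thesis by linarith
  next
    case False
    have "v ^ s \<le> u ^ s" by (rule power_mono) (use False assms in linarith)+
    have F: "v \<le> u" using False by linarith
    have d: "u - v \<le> 1 - a" using assms(6) F by linarith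
    have "u ^ s - v ^ s \<le> 1 - a ^ s" by (rule key[OF assms(3) F assms(2) d])
    with \<open>v ^ s \<le> u ^ s\<close> show ?thesis by linarith
  qed
qed

theorem theorem4p10:
  fixes pt pc :: "('v::finite) list pmf"
    and Out :: "'e \<Rightarrow> 'v list \<Rightarrow> 'v list \<Rightarrow> nat \<Rightarrow> 'o"
    and e :: 'e and s :: nat and c c' :: "'v list" and \<epsilon> :: real
  assumes "\<forall>t\<in>set_pmf pt. length t \<ge> 1"
    and "0 < \<epsilon>" and "\<epsilon> < 1"
    and "sim_pow s pt Out e c c' \<ge> 1 - \<epsilon>"
  shows "\<bar>nbhd_prob s pc pt Out e c - nbhd_prob s pc pt Out e c'\<bar> \<le> sqrt (2 * \<epsilon>)"
proof -
  let ?S = "sim pt Out e"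
  define a where "a = ?S c c'"
  have a01: "0 \<le> a \<and> a \<le> 1" unfolding a_def by (rule sim_bounds)
  have as: "a ^ s \<ge> 1 - \<epsilon>" using assms(4) unfolding a_def sim_pow_def by simp
  have pt_bound: "\<bar>?S c x ^ s - ?S c' x ^ s\<bar> \<le> \<epsilon>" for x
  proof -
    have t1: "?S c c' + ?S c' x - 1 \<le> ?S c x" by (rule sim_tri)
    have t2: "?S c' c + ?S c x - 1 \<le> ?S c' x" by (rule sim_tri)
    have "?S c' c = a" unfolding a_def by (rule sim_sym)
    then have "\<bar>?S c x - ?S c' x\<bar> \<le> 1 - a" using t1 t2 unfolding a_def by linarith
    then have "\<bar>?S c x ^ s - ?S c' x ^ s\<bar> \<le> 1 - a ^ s"
      using sim_bounds[of pt Out e c x] sim_bounds[of pt Out e c' x] a01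
      by (intro pow_abs_le) auto
    then show ?thesis using as by linarith
  qed
  have i1: "integrable (measure_pmf pc) (\<lambda>x. sim_pow s pt Out e c x)"
    unfolding sim_pow_def by (rule pmf_integrable01) (simp add: sim_bounds power_le_one)
  have i2: "integrable (measure_pmf pc) (\<lambda>x. sim_pow s pt Out e c' x)"
    unfolding sim_pow_def by (rule pmf_integrable01) (simp add: sim_bounds power_le_one)
  have "\<bar>nbhd_prob s pc pt Out e c - nbhd_prob s pc pt Out e c'\<bar>
      = \<bar>measure_pmf.expectation pc (\<lambda>x. sim_pow s pt Out e c x - sim_pow s pt Out e c' x)\<bar>"
    unfolding nbhd_prob_def using i1 i2 by (simp add: Bochner_Integration.integral_diff)
  also have "\<dots> \<le> measure_pmf.expectation pc (\<lambda>x. \<bar>sim_pow s pt Out e c x - sim_pow s pt Out e c' x\<bar>)"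
    by (rule integral_abs_bound)
  also have "\<dots> \<le> measure_pmf.expectation pc (\<lambda>_. \<epsilon>)"
  proof (rule integral_mono)
    show "integrable (measure_pmf pc) (\<lambda>x. \<bar>sim_pow s pt Out e c x - sim_pow s pt Out e c' x\<bar>)"
      using i1 i2 by (intro integrable_abs Bochner_Integration.integrable_diff)
  next
    fix x show "\<bar>sim_pow s pt Out e c x - sim_pow s pt Out e c' x\<bar> \<le> \<epsilon>"
      unfolding sim_pow_def by (rule pt_bound)
  qed simp
  also have "\<dots> = \<epsilon>" by simp
  also have "\<epsilon> \<le> sqrt (2 * \<epsilon>)"
  proof (rule real_le_rsqrt)
    have "\<epsilon> * \<epsilon> \<le> 2 * \<epsilon>" using assms(2,3) by (intro mult_right_mono) auto
    then show "\<epsilon>\<^sup>2 \<le> 2 * \<epsilon>" by (simp add: power2_eq_square)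
  qed
  finally show ?thesis .
qed

end
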